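(* Consider the nonpreemptive Lazy Bureaucrat Problem in which every job has unit processing time ($t_1=\cdots=t_n=1$) and all data are integers. The Latest Due Date (LDD) policy — at each integer time $\tau$ at which the processor is free, if some job is executable at $\tau$, start an executable job with the largest deadline (ties broken arbitrarily) — produces a feasible schedule that minimizes objective (1), the total amount of executed work, over all feasible schedules.
   Context: An instance of the Lazy Bureaucrat Problem (LBP) consists of jobs $1,\dots,n$; job $i$ has a processing time $t_i$, an arrival time $a_i$ and a deadline $d_i$, all nonnegative integers. Its critical time is $c_i=d_i-t_i$. A single processor (the bureaucrat) processes at most one job at a time. In the nonpreemptive setting, a schedule chooses a set of executed jobs and, for each executed job $i$, a start time $s_i$ with $a_i\le s_i\le c_i$; job $i$ is then processed without interruption during $[s_i,s_i+t_i)$, these intervals are pairwise disjoint, and each job is executed at most once. A job $i$ is executable at time $\tau$ if it has not been started before $\tau$ and $a_i\le\tau\le c_i$. A schedule is feasible if it satisfies the busy requirement: at every time $\tau$ at which the processor is not processing a job, no job is executable. Objective (1) is the total time spent working, $\sum t_i$ over executed jobs, to be minimized over feasible schedules. *)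

theory Defs
  imports Main "HOL.Real"
begin

(* Jobs are 0..n-1; processing times t, arrival times a, deadlines d are
   nonnegative integers (nat). A schedule is a set E of executed jobs together
   with (real-valued) start times s. *)

definition crit :: "(nat \<Rightarrow> nat) \<Rightarrow> (nat \<Rightarrow> nat) \<Rightarrow> nat \<Rightarrow> real" where
  "crit t d i = real (d i) - real (t i)"

definition executable ::
  "nat \<Rightarrow> (nat \<Rightarrow> nat) \<Rightarrow> (nat \<Rightarrow> nat) \<Rightarrow> (nat \<Rightarrow> nat) \<Rightarrow> nat set \<Rightarrow> (nat \<Rightarrow> real) \<Rightarrow> nat \<Rightarrow> real \<Rightarrow> bool" where
  "executable n t a d E s i \<tau> \<longleftrightarrow>
     i < n \<and> \<not> (i \<in> E \<and> s i < \<tau>) \<and> real (a i) \<le> \<tau> \<and> \<tau> \<le> crit t d i"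

definition busy :: "(nat \<Rightarrow> nat) \<Rightarrow> nat set \<Rightarrow> (nat \<Rightarrow> real) \<Rightarrow> real \<Rightarrow> bool" where
  "busy t E s \<tau> \<longleftrightarrow> (\<exists>i\<in>E. s i \<le> \<tau> \<and> \<tau> < s i + real (t i))"

definition schedule ::
  "nat \<Rightarrow> (nat \<Rightarrow> nat) \<Rightarrow> (nat \<Rightarrow> nat) \<Rightarrow> (nat \<Rightarrow> nat) \<Rightarrow> nat set \<Rightarrow> (nat \<Rightarrow> real) \<Rightarrow> bool" where
  "schedule n t a d E s \<longleftrightarrow>
     E \<subseteq> {..<n} \<and>
     (\<forall>i\<in>E. real (a i) \<le> s i \<and> s i \<le> crit t d i) \<and>
     (\<forall>i\<in>E. \<forall>j\<in>E. i \<noteq> j \<longrightarrow>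
        {s i..<s i + real (t i)} \<inter> {s j..<s j + real (t j)} = {})"

definition feasible ::
  "nat \<Rightarrow> (nat \<Rightarrow> nat) \<Rightarrow> (nat \<Rightarrow> nat) \<Rightarrow> (nat \<Rightarrow> nat) \<Rightarrow> nat set \<Rightarrow> (nat \<Rightarrow> real) \<Rightarrow> bool" where
  "feasible n t a d E s \<longleftrightarrow>
     schedule n t a d E s \<and>
     (\<forall>\<tau>::real. \<not> busy t E s \<tau> \<longrightarrow> \<not> (\<exists>i. executable n t a d E s i \<tau>))"

definition work :: "(nat \<Rightarrow> nat) \<Rightarrow> nat set \<Rightarrow> nat" where
  "work t E = (\<Sum>i\<in>E. t i)"

abbreviation unit_t :: "nat \<Rightarrow> nat" where
  "unit_t \<equiv> (\<lambda>_. 1)"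

(* A schedule produced by the LDD policy (unit processing times): jobs start only
   at integer times; at every integer time tau (where the processor is free, which
   with unit jobs at integer starts is every integer time), if some job is
   executable then a job is started at tau, and the started job has the largest
   deadline among the jobs executable at tau (ties arbitrary). *)
definition LDD_schedule ::
  "nat \<Rightarrow> (nat \<Rightarrow> nat) \<Rightarrow> (nat \<Rightarrow> nat) \<Rightarrow> nat set \<Rightarrow> (nat \<Rightarrow> real) \<Rightarrow> bool" where
  "LDD_schedule n a d E s \<longleftrightarrow>
     schedule n unit_t a d E s \<and>
     (\<forall>i\<in>E. s i \<in> \<int>) \<and>
     (\<forall>\<tau>::int.
        (\<forall>i\<in>E. s i = real_of_int \<tau> \<longrightarrow>
            (\<forall>j. executable n unit_t a d E s j (real_of_int \<tau>) \<longrightarrow> d j \<le> d i)) \<and>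
        ((\<exists>j. executable n unit_t a d E s j (real_of_int \<tau>)) \<longrightarrow>
            (\<exists>i\<in>E. s i = real_of_int \<tau>)))"

end

theory Submission
  imports Defs
begin

lemma sched_sep:
  assumes "schedule n unit_t a d E s" "i \<in> E" "j \<in> E" "i \<noteq> j"
  shows "s j + 1 \<le> s i \<or> s i + 1 \<le> s j"
proof (rule ccontr)
  assume "\<not> ?thesis"
  hence h: "s i < s j + 1" "s j < s i + 1" by auto
  have "{s i..<s i + 1} \<inter> {s j..<s j + 1} = {}" using assms unfolding schedule_def by auto
  moreover have "max (s i) (s j) \<in> {s i..<s i + 1} \<inter> {s j..<s j + 1}" using h by auto
  ultimately show False by blast
qed

lemma LDD_feasible:
  assumes L: "LDD_schedule n a d E s"
  shows "feasible n unit_t a d E s"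
proof -
  have schL: "schedule n unit_t a d E s"
    and ldd: "\<forall>\<tau>::int. (\<exists>j. executable n unit_t a d E s j (real_of_int \<tau>)) \<longrightarrow> (\<exists>i\<in>E. s i = real_of_int \<tau>)"
    using L unfolding LDD_schedule_def by auto
  have "\<not> (\<exists>j. executable n unit_t a d E s j \<tau>)" if nb: "\<not> busy unit_t E s \<tau>" for \<tau>
  proof
    assume "\<exists>j. executable n unit_t a d E s j \<tau>"
    then obtain j where ex: "executable n unit_t a d E s j \<tau>" by blast
    define k where "k = floor \<tau>"
    have kle: "of_int k \<le> \<tau>" unfolding k_def by (rule of_int_floor_le)
    have kgt: "\<tau> < of_int k + 1" unfolding k_def by (rule real_of_int_floor_add_one_gt)
    have "real (a j) \<le> \<tau>" using ex by (simp add: executable_def)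
    hence "int (a j) \<le> k" unfolding k_def by (simp add: le_floor_iff)
    hence "real (a j) \<le> of_int k" by (metis of_int_le_iff of_int_of_nat_eq)
    hence "executable n unit_t a d E s j (of_int k)"
      using ex kle unfolding executable_def by auto
    then obtain i where "i \<in> E" "s i = of_int k" using ldd by blast
    hence "busy unit_t E s \<tau>" using kle kgt unfolding busy_def by (intro bexI[of _ i]) auto
    thus False using nb by blast
  qed
  thus ?thesis using schL unfolding feasible_def by blast
qed

lemma LDD_busy:
  assumes L: "LDD_schedule n a d E s" and F: "feasible n unit_t a d E' s'" and x: "x \<in> E"
  shows "busy unit_t E' s' (s x)"
proof (rule ccontr)
  assume nb: "\<not> busy unit_t E' s' (s x)"
  have schL: "schedule n unit_t a d E s" and intL: "\<forall>i\<in>E. s i \<in> \<int>"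
    and ldd: "\<forall>\<tau>::int.
        (\<forall>i\<in>E. s i = real_of_int \<tau> \<longrightarrow>
            (\<forall>j. executable n unit_t a d E s j (real_of_int \<tau>) \<longrightarrow> d j \<le> d i)) \<and>
        ((\<exists>j. executable n unit_t a d E s j (real_of_int \<tau>)) \<longrightarrow>
            (\<exists>i\<in>E. s i = real_of_int \<tau>))"
    using L unfolding LDD_schedule_def by auto
  have schS: "schedule n unit_t a d E' s'" and noex: "\<forall>j. \<not> executable n unit_t a d E' s' j (s x)"
    using F nb unfolding feasible_def by auto
  obtain k where k: "s x = of_int k" using intL x Ints_cases by metis
  have EL: "E \<subseteq> {..<n}" and bndL: "\<forall>i\<in>E. real (a i) \<le> s i \<and> s i \<le> real (d i) - 1"
    using schL by (auto simp: schedule_def crit_def)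
  have bndS: "\<forall>i\<in>E'. real (a i) \<le> s' i \<and> s' i \<le> real (d i) - 1"
    using schS by (auto simp: schedule_def crit_def)
  have sinj: "i = j" if "i\<in>E" "j\<in>E" "s i = s j" for i j
    using sched_sep[OF schL, of i j] that by force
  have "0 \<le> s x" using bndL x by (meson of_nat_0_le_iff order_trans)
  hence k0: "0 \<le> k" using k by simp
  define Q where "Q t \<longleftrightarrow> t = -1 \<or> (\<forall>i\<in>E. s i \<noteq> of_int t) \<or> (\<exists>i\<in>E. s i = of_int t \<and> d i < d x)" for t :: int
  define T where "T = {t \<in> {-1..<k}. Q t}"
  have finT: "finite T" by (rule finite_subset[of _ "{-1..<k}"]) (auto simp: T_def)
  have mT: "-1 \<in> T" unfolding T_def Q_def using k0 by simp
  define t0 where "t0 = Max T"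
  have t0T: "t0 \<in> T" unfolding t0_def using finT mT Max_in by blast
  have t0max: "t \<le> t0" if "t \<in> T" for t unfolding t0_def using finT that by simp
  have t0k: "-1 \<le> t0" "t0 < k" "Q t0" using t0T unfolding T_def by auto
  have between: "\<exists>i\<in>E. s i = of_int t \<and> d x \<le> d i" if t: "t0 < t" "t \<le> k" for t
  proof (cases "t = k")
    case True thus ?thesis using x k by auto
  next
    case False
    hence "t \<notin> T" using t0max t by force
    hence "\<not> Q t" unfolding T_def using t False t0k by auto
    thus ?thesis unfolding Q_def by (auto simp: not_less)
  qed
  define f where "f t = (SOME i. i \<in> E \<and> s i = of_int t \<and> d x \<le> d i)" for t
  have f: "f t \<in> E \<and> s (f t) = of_int t \<and> d x \<le> d (f t)" if "t0 < t" "t \<le> k" for t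
  proof -
    from between[OF that] have "\<exists>i. i \<in> E \<and> s i = of_int t \<and> d x \<le> d i" by blast
    from someI_ex[OF this] show ?thesis unfolding f_def .
  qed
  have dxk: "of_int k \<le> real (d x) - 1" using bndL x k by auto
  have key: "f t \<in> E' \<and> of_int (t0 + 1) \<le> s' (f t) \<and> s' (f t) + 1 \<le> of_int k"
    if t: "t0 < t" "t \<le> k" for t
  proof -
    define j where "j = f t"
    have j: "j \<in> E" "s j = of_int t" "d x \<le> d j" using f[OF t] unfolding j_def by auto
    have jn: "j < n" using EL j by auto
    have ajt: "real (a j) \<le> of_int t" using bndL j by auto
    have "real (d x) \<le> real (d j)" using j by simp
    hence cj: "of_int k \<le> real (d j) - 1" using dxk by simp
    have "of_int t \<le> (of_int k :: real)" using t by simp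
    hence jE': "j \<in> E' \<and> s' j < of_int k"
      using noex jn ajt cj k unfolding executable_def crit_def by fastforce
    hence up: "s' j + 1 \<le> of_int k" using nb k unfolding busy_def by force
    have low: "of_int (t0+1) \<le> real (a j)"
    proof (rule ccontr)
      assume "\<not> ?thesis"
      hence "real (a j) < of_int (t0 + 1)" by simp
      hence "int (a j) < t0 + 1" by (metis of_int_less_iff of_int_of_nat_eq)
      hence ajt0: "int (a j) \<le> t0" by simp
      hence t0ne: "t0 \<noteq> -1" by simp
      have "real (a j) \<le> of_int t0" using ajt0 by (metis of_int_le_iff of_int_of_nat_eq)
      moreover have "of_int t0 < (of_int t :: real)" using t by simp
      moreover have "of_int t0 < (of_int k :: real)" using t0k by simp
      ultimately have exL: "executable n unit_t a d E s j (of_int t0)"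
        using jn j cj unfolding executable_def crit_def by auto
      then obtain i where i: "i \<in> E" "s i = of_int t0" using ldd by blast
      hence dji: "d j \<le> d i" using ldd exL by blast
      from t0k(3) t0ne i show False unfolding Q_def
      proof (elim disjE)
        assume "\<exists>i\<in>E. s i = of_int t0 \<and> d i < d x"
        then obtain i' where "i' \<in> E" "s i' = of_int t0" "d i' < d x" by blast
        hence "i' = i" using sinj i by auto
        thus False using dji j(3) \<open>d i' < d x\<close> by simp
      qed auto
    qed
    have "real (a j) \<le> s' j" using bndS jE' by auto
    thus ?thesis using jE' up low unfolding j_def by auto
  qed
  define g where "g t = floor (s' (f t))" for t
  have inj: "inj_on g {t0<..k}"
  proof (rule inj_onI, rule ccontr)
    fix t t' assume t: "t \<in> {t0<..k}" and t': "t' \<in> {t0<..k}" and eq: "g t = g t'" and ne: "t \<noteq> t'"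
    have ft: "f t \<in> E'" "s (f t) = of_int t" using key f t by auto
    have ft': "f t' \<in> E'" "s (f t') = of_int t'" using key f t' by auto
    have "f t \<noteq> f t'" using ft ft' ne by auto
    hence sep: "s' (f t') + 1 \<le> s' (f t) \<or> s' (f t) + 1 \<le> s' (f t')" using sched_sep[OF schS] ft ft' by blast
    have l1: "of_int (g t) \<le> s' (f t)" "s' (f t) < of_int (g t) + 1" unfolding g_def
      by (auto simp: of_int_floor_le real_of_int_floor_add_one_gt)
    have l2: "of_int (g t') \<le> s' (f t')" "s' (f t') < of_int (g t') + 1" unfolding g_def
      by (auto simp: of_int_floor_le real_of_int_floor_add_one_gt)
    show False using sep l1 l2 eq by linarith
  qed
  have img: "g ` {t0<..k} \<subseteq> {t0+1..k-1}"
  proof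
    fix z assume "z \<in> g ` {t0<..k}"
    then obtain t where t: "t \<in> {t0<..k}" and z: "z = g t" by blast
    have kt: "of_int (t0 + 1) \<le> s' (f t)" "s' (f t) + 1 \<le> of_int k" using key t by auto
    have "t0 + 1 \<le> z" using kt unfolding z g_def by (simp add: le_floor_iff)
    moreover have "z < k" using kt unfolding z g_def by (simp add: floor_less_iff)
    ultimately show "z \<in> {t0+1..k-1}" by simp
  qed
  have "card {t0<..k} \<le> card {t0+1..k-1}" by (rule card_inj_on_le[OF inj img]) simp
  thus False using t0k by simp
qed

lemma LDD_opt:
  assumes L: "LDD_schedule n a d E s" and F: "feasible n unit_t a d E' s'"
  shows "card E \<le> card E'"
proof -
  have schL: "schedule n unit_t a d E s" using L unfolding LDD_schedule_def by auto
  have schS: "schedule n unit_t a d E' s'" using F unfolding feasible_def by auto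
  have finS: "finite E'" using schS unfolding schedule_def by (meson finite_lessThan finite_subset)
  define h where "h i = (SOME j. j \<in> E' \<and> s' j \<le> s i \<and> s i < s' j + 1)" for i
  have h: "h i \<in> E' \<and> s' (h i) \<le> s i \<and> s i < s' (h i) + 1" if "i \<in> E" for i
  proof -
    have "\<exists>j. j \<in> E' \<and> s' j \<le> s i \<and> s i < s' j + 1"
      using LDD_busy[OF L F that] unfolding busy_def by auto
    from someI_ex[OF this] show ?thesis unfolding h_def .
  qed
  have inj: "inj_on h E"
  proof (rule inj_onI, rule ccontr)
    fix i i' assume i: "i \<in> E" and i': "i' \<in> E" and eq: "h i = h i'" and ne: "i \<noteq> i'"
    have "s i' + 1 \<le> s i \<or> s i + 1 \<le> s i'" using sched_sep[OF schL i i' ne] .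
    thus False using h[OF i] h[OF i'] eq by auto
  qed
  have "h ` E \<subseteq> E'" using h by auto
  show ?thesis by (rule card_inj_on_le[OF inj \<open>h ` E \<subseteq> E'\<close> finS])
qed



context
  fixes n :: nat and a d :: "nat \<Rightarrow> nat"
begin

definition avail :: "(nat \<Rightarrow> nat option) \<Rightarrow> nat \<Rightarrow> nat set" where
  "avail m \<tau> = {j. j < n \<and> m j = None \<and> a j \<le> \<tau> \<and> \<tau> < d j}"

definition chs :: "(nat \<Rightarrow> nat option) \<Rightarrow> nat \<Rightarrow> nat option" where
  "chs m \<tau> = (if avail m \<tau> = {} then None
     else Some (SOME j. j \<in> avail m \<tau> \<and> (\<forall>j'\<in>avail m \<tau>. d j' \<le> d j)))"

primrec st :: "nat \<Rightarrow> nat \<Rightarrow> nat option" where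
  "st 0 = (\<lambda>_. None)"
| "st (Suc \<tau>) = (case chs (st \<tau>) \<tau> of None \<Rightarrow> st \<tau> | Some j \<Rightarrow> (st \<tau>)(j := Some \<tau>))"

definition ch :: "nat \<Rightarrow> nat option" where "ch \<tau> = chs (st \<tau>) \<tau>"

definition E0 :: "nat set" where "E0 = {j. \<exists>t. ch t = Some j}"
definition s0 :: "nat \<Rightarrow> real" where "s0 j = real (THE t. ch t = Some j)"

lemma chs_prop:
  assumes h: "chs m \<tau> = Some j"
  shows "j \<in> avail m \<tau> \<and> (\<forall>j'\<in>avail m \<tau>. d j' \<le> d j)"
proof -
  have ne: "avail m \<tau> \<noteq> {}" using h by (auto simp: chs_def split: if_splits)
  have fin: "finite (avail m \<tau>)" by (rule finite_subset[of _ "{..<n}"]) (auto simp: avail_def)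
  define M where "M = Max (d ` avail m \<tau>)"
  have "M \<in> d ` avail m \<tau>" unfolding M_def using fin ne by simp
  then obtain j0 where j0: "j0 \<in> avail m \<tau>" "d j0 = M" by blast
  have "\<forall>j'\<in>avail m \<tau>. d j' \<le> d j0" using fin j0 unfolding M_def by simp
  hence "\<exists>j. j \<in> avail m \<tau> \<and> (\<forall>j'\<in>avail m \<tau>. d j' \<le> d j)" using j0 by blast
  from someI_ex[OF this] h ne show ?thesis by (auto simp: chs_def)
qed

lemma chs_none: "chs m \<tau> = None \<Longrightarrow> avail m \<tau> = {}"
  by (auto simp: chs_def split: if_splits)

lemma ch_prop: "ch t = Some j \<Longrightarrow> j \<in> avail (st t) t \<and> (\<forall>j'\<in>avail (st t) t. d j' \<le> d j)"
  unfolding ch_def by (rule chs_prop)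

lemma st_iff: "st \<tau> j = Some t \<longleftrightarrow> t < \<tau> \<and> ch t = Some j"
proof (induction \<tau> arbitrary: t)
  case 0 show ?case by simp
next
  case (Suc \<tau>)
  show ?case
  proof (cases "ch \<tau>")
    case None
    then have e: "st (Suc \<tau>) = st \<tau>" by (simp add: ch_def)
    have "(t < Suc \<tau> \<and> ch t = Some j) \<longleftrightarrow> (t < \<tau> \<and> ch t = Some j)"
      using None by (metis less_Suc_eq option.distinct(1))
    thus ?thesis using Suc.IH[of t] e by simp
  next
    case (Some i)
    then have st: "st (Suc \<tau>) = (st \<tau>)(i := Some \<tau>)" by (simp add: ch_def)
    have "i \<in> avail (st \<tau>) \<tau>" using ch_prop Some by blast
    then have none: "st \<tau> i = None" by (simp add: avail_def)
    show ?thesis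
    proof (cases "j = i")
      case True
      have "(t < Suc \<tau> \<and> ch t = Some j) \<longleftrightarrow> t = \<tau>"
      proof
        assume h: "t < Suc \<tau> \<and> ch t = Some j"
        show "t = \<tau>"
        proof (rule ccontr)
          assume "t \<noteq> \<tau>"
          hence "t < \<tau>" using h by simp
          hence "st \<tau> i = Some t" using Suc.IH[of t] h True by simp
          thus False using none by simp
        qed
      next
        assume "t = \<tau>" thus "t < Suc \<tau> \<and> ch t = Some j" using Some True by simp
      qed
      moreover have "st (Suc \<tau>) j = Some \<tau>" using st True by simp
      ultimately show ?thesis by auto
    next
      case False
      have "(t < Suc \<tau> \<and> ch t = Some j) \<longleftrightarrow> (t < \<tau> \<and> ch t = Some j)"
        using Some False by (metis less_Suc_eq option.inject)
      moreover have "st (Suc \<tau>) j = st \<tau> j" using st False by simp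
      ultimately show ?thesis using Suc.IH[of t] by simp
    qed
  qed
qed

lemma ch_unique: assumes a1: "ch t = Some j" and a2: "ch t' = Some j" shows "t = t'"
proof (rule ccontr)
  assume ne: "t \<noteq> t'"
  have n1: "st t' j = None" using ch_prop[OF a2] by (simp add: avail_def)
  have n2: "st t j = None" using ch_prop[OF a1] by (simp add: avail_def)
  show False
  proof (cases "t < t'")
    case True
    hence "st t' j = Some t" using st_iff a1 by blast
    thus False using n1 by simp
  next
    case False
    hence "t' < t" using ne by simp
    hence "st t j = Some t'" using st_iff a2 by blast
    thus False using n2 by simp
  qed
qed

lemma s0_eq: assumes "ch t = Some j" shows "s0 j = real t"
proof -
  have "(THE t. ch t = Some j) = t"
  proof (rule the_equality)
    show "ch t = Some j" by (rule assms)
    fix x assume "ch x = Some j" thus "x = t" using ch_unique assms by blast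
  qed
  thus ?thesis unfolding s0_def by simp
qed

lemma avail_of_exec:
  assumes ex: "executable n unit_t a d E0 s0 j (real t)"
  shows "j \<in> avail (st t) t"
proof -
  have "st t j = None"
  proof (rule ccontr)
    assume "st t j \<noteq> None"
    then obtain t' where "st t j = Some t'" by blast
    hence "t' < t" "ch t' = Some j" using st_iff by auto
    hence "j \<in> E0" "s0 j < real t" using s0_eq by (auto simp: E0_def)
    thus False using ex by (simp add: executable_def)
  qed
  moreover have "a j \<le> t" "t < d j" using ex by (auto simp: executable_def crit_def)
  ultimately show ?thesis using ex by (simp add: avail_def executable_def)
qed

lemma LDD_exists: "LDD_schedule n a d E0 s0"
  unfolding LDD_schedule_def schedule_def
proof (intro conjI ballI allI impI)
  show "E0 \<subseteq> {..<n}" using ch_prop by (auto simp: E0_def avail_def)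
next
  fix i assume "i \<in> E0"
  then obtain t where t: "ch t = Some i" by (auto simp: E0_def)
  have "a i \<le> t" "t < d i" using ch_prop[OF t] by (auto simp: avail_def)
  hence "real (a i) \<le> real t" "real t + 1 \<le> real (d i)" by simp_all
  thus "real (a i) \<le> s0 i" "s0 i \<le> crit unit_t d i" using s0_eq[OF t] by (auto simp: crit_def)
  show "s0 i \<in> \<int>" using s0_eq[OF t] by simp
next
  fix i j assume i: "i \<in> E0" and j: "j \<in> E0" and ne: "i \<noteq> j"
  obtain ti where ti: "ch ti = Some i" using i by (auto simp: E0_def)
  obtain tj where tj: "ch tj = Some j" using j by (auto simp: E0_def)
  have "ti \<noteq> tj" using ti tj ne by auto
  hence "ti + 1 \<le> tj \<or> tj + 1 \<le> ti" by arith
  hence "real ti + 1 \<le> real tj \<or> real tj + 1 \<le> real ti"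
    by (metis of_nat_1 of_nat_add of_nat_le_iff)
  thus "{s0 i..<s0 i + real (unit_t i)} \<inter> {s0 j..<s0 j + real (unit_t j)} = {}"
    using s0_eq[OF ti] s0_eq[OF tj] by auto
next
  fix \<tau> :: int and i j
  assume i: "i \<in> E0" and si: "s0 i = real_of_int \<tau>" and ex: "executable n unit_t a d E0 s0 j (real_of_int \<tau>)"
  obtain t where t: "ch t = Some i" using i by (auto simp: E0_def)
  have "real_of_int \<tau> = real t" using si s0_eq[OF t] by simp
  hence "executable n unit_t a d E0 s0 j (real t)" using ex by simp
  hence "j \<in> avail (st t) t" by (rule avail_of_exec)
  thus "d j \<le> d i" using ch_prop[OF t] by blast
next
  fix \<tau> :: int
  assume "\<exists>j. executable n unit_t a d E0 s0 j (real_of_int \<tau>)"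
  then obtain j where ex: "executable n unit_t a d E0 s0 j (real_of_int \<tau>)" by blast
  have "0 \<le> real_of_int \<tau>" using ex unfolding executable_def by (meson of_nat_0_le_iff order_trans)
  hence "0 \<le> \<tau>" by simp
  then obtain t where tt: "\<tau> = int t" using nonneg_int_cases by blast
  hence "executable n unit_t a d E0 s0 j (real t)" using ex by simp
  hence "j \<in> avail (st t) t" by (rule avail_of_exec)
  hence "ch t \<noteq> None" using chs_none unfolding ch_def by blast
  then obtain i where "ch t = Some i" by blast
  thus "\<exists>i\<in>E0. s0 i = real_of_int \<tau>" using s0_eq tt by (auto simp: E0_def)
qed

end

theorem theorem3:
  fixes n :: nat and a d :: "nat \<Rightarrow> nat"
  shows "(\<exists>E s. LDD_schedule n a d E s) \<and>
         (\<forall>E s. LDD_schedule n a d E s \<longrightarrow>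
            feasible n unit_t a d E s \<and>
            (\<forall>E' s'. feasible n unit_t a d E' s' \<longrightarrow> work unit_t E \<le> work unit_t E'))"
proof (intro conjI allI impI)
  show "\<exists>E s. LDD_schedule n a d E s" using LDD_exists by blast
next
  fix E s assume L: "LDD_schedule n a d E s"
  show "feasible n unit_t a d E s" using LDD_feasible[OF L] .
  fix E' s' assume F: "feasible n unit_t a d E' s'"
  show "work unit_t E \<le> work unit_t E'" using LDD_opt[OF L F] by (simp add: work_def)
qed

end
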